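(* Let $p\neq 2$ be a prime and $G=Z_{p^{\lambda_1}}\times\cdots\times Z_{p^{\lambda_n}}$ with $0<\lambda_1<\cdots<\lambda_n$. If $n\ge 2$ and $\lambda_n-\lambda_{n-1}\ge 2$, then $J(G)$ has precisely two maximal down-set chains, namely $D_1(G)=\{J(i,1):i\in\{1,\dots,n\}\}$ and $D_2(G)=\{J(n,j):j\in\{1,\dots,\lambda_n-\lambda_{n-1}\}\}$.
   Context: Tuples are ordered componentwise; for $\mathbf 0\le\mathbf a\le(\lambda_1,\dots,\lambda_n)$, $T(\mathbf a)$ is the set of $(g_1,\dots,g_n)\in G$ with $|g_i|=p^{a_i}$, and $R(\mathbf a)=\bigcup_{\mathbf b\le\mathbf a}T(\mathbf b)$. For $i\in\{1,\dots,n\}$ and $j\in\{1,\dots,\lambda_i\}$, $J(i,j)=R(\mathbf a)$ where $a_k=j$ for $k\ge i$ and $a_k=\max\{0,\,j-(\lambda_i-\lambda_k)\}$ for $k<i$. $J(G)$ is the set of all $J(i,j)$, partially ordered by inclusion. A down set of a poset $P$ is a subset $X$ such that $x\le y\in X$ implies $x\in X$; a down-set chain is a subset that is both a chain and a down set; it is maximal if it is not contained in a strictly larger down-set chain. *)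

theory Defs
  imports "HOL-Algebra.Elementary_Groups" "HOL-Algebra.Multiplicative_Group" "HOL-Computational_Algebra.Primes"
begin

text \<open>G = Z_{p^lam 1} x ... x Z_{p^lam n}, elements as tuples g :: nat => int indexed by 1..n,
  component i lying in the carrier of integer_mod_group (p ^ lam i); outside 1..n the tuple is 0.\<close>
definition cycG :: "nat \<Rightarrow> nat \<Rightarrow> (nat \<Rightarrow> nat) \<Rightarrow> (nat \<Rightarrow> int) set" where
  "cycG p n lam = {g. (\<forall>i\<in>{1..n}. g i \<in> carrier (integer_mod_group (p ^ lam i)))
                      \<and> (\<forall>i. i \<notin> {1..n} \<longrightarrow> g i = 0)}"

definition comp_ord :: "nat \<Rightarrow> (nat \<Rightarrow> nat) \<Rightarrow> (nat \<Rightarrow> int) \<Rightarrow> nat \<Rightarrow> nat" where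
  "comp_ord p lam g i = group.ord (integer_mod_group (p ^ lam i)) (g i)"

definition T_set :: "nat \<Rightarrow> nat \<Rightarrow> (nat \<Rightarrow> nat) \<Rightarrow> (nat \<Rightarrow> nat) \<Rightarrow> (nat \<Rightarrow> int) set" where
  "T_set p n lam a = {g \<in> cycG p n lam. \<forall>i\<in>{1..n}. comp_ord p lam g i = p ^ a i}"

definition R_set :: "nat \<Rightarrow> nat \<Rightarrow> (nat \<Rightarrow> nat) \<Rightarrow> (nat \<Rightarrow> nat) \<Rightarrow> (nat \<Rightarrow> int) set" where
  "R_set p n lam a = (\<Union>b \<in> {b. \<forall>i\<in>{1..n}. b i \<le> a i}. T_set p n lam b)"

definition J_exp :: "nat \<Rightarrow> (nat \<Rightarrow> nat) \<Rightarrow> nat \<Rightarrow> nat \<Rightarrow> nat \<Rightarrow> nat" where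
  "J_exp n lam i j k = (if k \<ge> i then j
      else nat (max 0 (int j - (int (lam i) - int (lam k)))))"

definition J_set :: "nat \<Rightarrow> nat \<Rightarrow> (nat \<Rightarrow> nat) \<Rightarrow> nat \<Rightarrow> nat \<Rightarrow> (nat \<Rightarrow> int) set" where
  "J_set p n lam i j = R_set p n lam (J_exp n lam i j)"

definition JG :: "nat \<Rightarrow> nat \<Rightarrow> (nat \<Rightarrow> nat) \<Rightarrow> (nat \<Rightarrow> int) set set" where
  "JG p n lam = {J_set p n lam i j | i j. i \<in> {1..n} \<and> j \<in> {1..lam i}}"

definition is_down_set :: "'a set \<Rightarrow> ('a \<Rightarrow> 'a \<Rightarrow> bool) \<Rightarrow> 'a set \<Rightarrow> bool" where
  "is_down_set P leq X \<longleftrightarrow> X \<subseteq> P \<and> (\<forall>x\<in>P. \<forall>y\<in>X. leq x y \<longrightarrow> x \<in> X)"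

definition is_chain_in :: "'a set \<Rightarrow> ('a \<Rightarrow> 'a \<Rightarrow> bool) \<Rightarrow> 'a set \<Rightarrow> bool" where
  "is_chain_in P leq X \<longleftrightarrow> X \<subseteq> P \<and> (\<forall>x\<in>X. \<forall>y\<in>X. leq x y \<or> leq y x)"

definition down_set_chain :: "'a set \<Rightarrow> ('a \<Rightarrow> 'a \<Rightarrow> bool) \<Rightarrow> 'a set \<Rightarrow> bool" where
  "down_set_chain P leq X \<longleftrightarrow> is_chain_in P leq X \<and> is_down_set P leq X"

definition maximal_down_set_chain :: "'a set \<Rightarrow> ('a \<Rightarrow> 'a \<Rightarrow> bool) \<Rightarrow> 'a set \<Rightarrow> bool" where
  "maximal_down_set_chain P leq X \<longleftrightarrow> down_set_chain P leq X \<and>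
     \<not> (\<exists>Y. down_set_chain P leq Y \<and> X \<subset> Y)"

end

theory Submission
  imports Defs
begin

lemma ord_dvd_pl:
  assumes "x \<in> carrier (integer_mod_group (p^l))"
  shows "group.ord (integer_mod_group (p^l)) x dvd p^l"
proof -
  interpret Z: group "integer_mod_group (p^l)" by simp
  have "x [^]\<^bsub>integer_mod_group (p^l)\<^esub> (p^l) = \<one>\<^bsub>integer_mod_group (p^l)\<^esub>"
    by simp
  thus ?thesis using Z.pow_eq_id[OF assms, of "p^l"] by blast
qed

lemma wit_ord:
  assumes p: "prime p" and al: "a \<le> l"
  shows "int (p^(l-a)) mod int (p^l) \<in> carrier (integer_mod_group (p^l))"
    and "group.ord (integer_mod_group (p^l)) (int (p^(l-a)) mod int (p^l)) = p^a"
proof -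
  interpret Z: group "integer_mod_group (p^l)" by simp
  have pp: "p > 0" using p prime_gt_0_nat by blast
  have pl: "p^l > 0" using pp by simp
  show c: "int (p^(l-a)) mod int (p^l) \<in> carrier (integer_mod_group (p^l))"
    using pl by (simp add: carrier_integer_mod_group)
  show "group.ord (integer_mod_group (p^l)) (int (p^(l-a)) mod int (p^l)) = p^a"
  proof (subst Z.ord_unique[OF c], intro allI)
    fix m :: nat
    have e: "p^l = p^a * p^(l-a)" using al by (simp flip: power_add)
    have "(int m * (int (p^(l-a)) mod int (p^l))) mod int (p^l) = int (m * p^(l-a)) mod int (p^l)"
      by (simp add: mod_mult_right_eq)
    also have "\<dots> = int ((m * p^(l-a)) mod p^l)" by (simp add: zmod_int)
    finally have *: "(int m * (int (p^(l-a)) mod int (p^l))) mod int (p^l) = int ((m * p^(l-a)) mod p^l)" .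
    have "(m * p^(l-a)) mod p^l = 0 \<longleftrightarrow> p^a dvd m"
      using pp by (simp add: e dvd_eq_mod_eq_0)
    then show "(int (p^(l-a)) mod int (p^l)) [^]\<^bsub>integer_mod_group (p^l)\<^esub> m = \<one>\<^bsub>integer_mod_group (p^l)\<^esub> \<longleftrightarrow> p^a dvd m"
      by (simp only: pow_integer_mod_group one_integer_mod_group * of_nat_eq_0_iff)
  qed
qed

lemma R_mem:
  assumes p: "prime p"
  shows "g \<in> R_set p n lam a \<longleftrightarrow> g \<in> cycG p n lam \<and> (\<forall>i\<in>{1..n}. comp_ord p lam g i dvd p ^ a i)"
proof
  assume "g \<in> R_set p n lam a"
  then obtain b where b: "\<forall>i\<in>{1..n}. b i \<le> a i" and g: "g \<in> T_set p n lam b"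
    unfolding R_set_def by blast
  then show "g \<in> cycG p n lam \<and> (\<forall>i\<in>{1..n}. comp_ord p lam g i dvd p ^ a i)"
    unfolding T_set_def by (auto intro: le_imp_power_dvd)
next
  assume A: "g \<in> cycG p n lam \<and> (\<forall>i\<in>{1..n}. comp_ord p lam g i dvd p ^ a i)"
  define b where "b i = (SOME e. e \<le> a i \<and> comp_ord p lam g i = p ^ e)" for i
  have "\<forall>i\<in>{1..n}. b i \<le> a i \<and> comp_ord p lam g i = p ^ b i"
  proof
    fix i assume i: "i \<in> {1..n}"
    then have "\<exists>e. e \<le> a i \<and> comp_ord p lam g i = p ^ e"
      using A divides_primepow_nat[OF p] by blast
    then show "b i \<le> a i \<and> comp_ord p lam g i = p ^ b i"
      unfolding b_def by (rule someI_ex)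
  qed
  then show "g \<in> R_set p n lam a" using A unfolding R_set_def T_set_def by blast
qed

lemma cyc_ord_dvd:
  assumes "g \<in> cycG p n lam" "i \<in> {1..n}"
  shows "comp_ord p lam g i dvd p ^ lam i"
  using assms ord_dvd_pl unfolding cycG_def comp_ord_def by blast

lemma R_sub:
  assumes p: "prime p" and al: "\<forall>k\<in>{1..n}. a k \<le> lam k"
  shows "R_set p n lam a \<subseteq> R_set p n lam b \<longleftrightarrow> (\<forall>k\<in>{1..n}. a k \<le> b k)"
proof
  assume S: "R_set p n lam a \<subseteq> R_set p n lam b"
  define g where "g k = (if k \<in> {1..n} then int (p^(lam k - a k)) mod int (p^lam k) else 0)" for k
  have gc: "g \<in> cycG p n lam" unfolding cycG_def g_def using wit_ord(1)[OF p] al by auto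
  have go: "comp_ord p lam g k = p ^ a k" if "k \<in> {1..n}" for k
    unfolding comp_ord_def g_def using wit_ord(2)[OF p] al that by auto
  have "g \<in> R_set p n lam a" using R_mem[OF p] gc go by auto
  then have "g \<in> R_set p n lam b" using S by blast
  then have "\<forall>k\<in>{1..n}. p ^ a k dvd p ^ b k" using R_mem[OF p] go by auto
  moreover have "1 < p" using p prime_gt_1_nat by blast
  ultimately show "\<forall>k\<in>{1..n}. a k \<le> b k" using power_dvd_imp_le by blast
next
  assume "\<forall>k\<in>{1..n}. a k \<le> b k"
  show "R_set p n lam a \<subseteq> R_set p n lam b"
  proof
    fix g assume "g \<in> R_set p n lam a"
    then show "g \<in> R_set p n lam b" unfolding R_mem[OF p]
      using le_imp_power_dvd dvd_trans \<open>\<forall>k\<in>{1..n}. a k \<le> b k\<close> by blast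
  qed
qed

locale setting =
  fixes p n :: nat and lam :: "nat \<Rightarrow> nat"
  assumes p: "prime p" and n2: "n \<ge> 2" and l1: "0 < lam 1"
    and mono: "\<And>i k. i \<in> {1..n} \<Longrightarrow> k \<in> {1..n} \<Longrightarrow> i < k \<Longrightarrow> lam i < lam k"
    and d2: "lam n - lam (n - 1) \<ge> 2"
begin

abbreviation "V \<equiv> J_exp n lam"
abbreviation "J \<equiv> J_set p n lam"
abbreviation "d \<equiv> lam n - lam (n - 1)"

lemma mono': "i \<in> {1..n} \<Longrightarrow> k \<in> {1..n} \<Longrightarrow> i \<le> k \<Longrightarrow> lam i \<le> lam k"
  using mono by (metis order_le_less)

lemma Vsimp: "i \<in> {1..n} \<Longrightarrow> k \<in> {1..n} \<Longrightarrow>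
   V i j k = (if i \<le> k then j else j - (lam i - lam k))"
proof -
  assume i: "i \<in> {1..n}" and k: "k \<in> {1..n}"
  show ?thesis
  proof (cases "i \<le> k")
    case True then show ?thesis by (simp add: J_exp_def)
  next
    case False
    then have "lam k \<le> lam i" using mono' i k by simp
    then show ?thesis using False unfolding J_exp_def by (simp add: max_def nat_diff_distrib)
  qed
qed

lemma Vle: "i \<in> {1..n} \<Longrightarrow> j \<le> lam i \<Longrightarrow> k \<in> {1..n} \<Longrightarrow> V i j k \<le> lam k"
  using mono'[of i k] mono'[of k i] by (auto simp: Vsimp)

lemma Jsub: "i \<in> {1..n} \<Longrightarrow> j \<le> lam i \<Longrightarrow>
   J i j \<subseteq> J i' j' \<longleftrightarrow> (\<forall>k\<in>{1..n}. V i j k \<le> V i' j' k)"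
  unfolding J_set_def using R_sub[OF p] Vle by blast

lemma JG_E:
  assumes "x \<in> JG p n lam"
  obtains i j where "x = J i j" "i \<in> {1..n}" "j \<in> {1..lam i}"
  using assms unfolding JG_def by blast

lemma JG_I: "i \<in> {1..n} \<Longrightarrow> j \<in> {1..lam i} \<Longrightarrow> J i j \<in> JG p n lam"
  unfolding JG_def by blast

lemma lam_pos: "k \<in> {1..n} \<Longrightarrow> lam k \<ge> 1"
  using mono'[of 1 k] l1 by auto

lemma V1: "i \<in> {1..n} \<Longrightarrow> k \<in> {1..n} \<Longrightarrow> V i 1 k = (if i \<le> k then 1 else 0)"
  using mono[of k i] by (auto simp: Vsimp)

lemma lam_nm1: "k \<in> {1..n} \<Longrightarrow> k < n \<Longrightarrow> lam k \<le> lam (n - 1)"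
  using mono'[of k "n - 1"] n2 by auto

lemma V2: "j \<le> d \<Longrightarrow> k \<in> {1..n} \<Longrightarrow> V n j k = (if k = n then j else 0)"
  using lam_nm1[of k] n2 by (auto simp: Vsimp)

lemma Vn: "i \<in> {1..n} \<Longrightarrow> V i j n = j"
  using n2 by (auto simp: Vsimp)

lemma Vnm1: "V n j (n - 1) = j - d"
  using n2 by (auto simp: Vsimp)

lemma Vge: "i \<in> {1..n} \<Longrightarrow> k \<in> {1..n} \<Longrightarrow> i \<le> k \<Longrightarrow> V i j k = j"
  by (auto simp: Vsimp)

abbreviation "D1 \<equiv> {J i 1 | i. i \<in> {1..n}}"
abbreviation "D2 \<equiv> {J n j | j. j \<in> {1..d}}"
abbreviation "P \<equiv> JG p n lam"

lemma nn: "n \<in> {1..n}" "n - 1 \<in> {1..n}" using n2 by auto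

lemma D1_sub: "D1 \<subseteq> P"
  using lam_pos JG_I by fastforce

lemma D2_sub: "D2 \<subseteq> P"
proof -
  have "d \<le> lam n" by simp
  then show ?thesis using JG_I[OF nn(1)] by fastforce
qed

lemma D1_down: "is_down_set P (\<subseteq>) D1"
  unfolding is_down_set_def
proof (intro conjI D1_sub ballI impI)
  fix x y assume x: "x \<in> P" and y: "y \<in> D1" and xy: "x \<subseteq> y"
  obtain i where i: "i \<in> {1..n}" "y = J i 1" using y by blast
  obtain i' j' where x': "x = J i' j'" "i' \<in> {1..n}" "j' \<in> {1..lam i'}" using x by (rule JG_E)
  have "V i' j' i' \<le> V i 1 i'" using Jsub[of i' j' i 1] x' i xy by auto
  then have "j' \<le> 1" using V1[of i i'] Vge[of i' i' j'] i x' by (auto split: if_splits)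
  then show "x \<in> D1" using x' by auto
qed

lemma D1_chain: "is_chain_in P (\<subseteq>) D1"
  unfolding is_chain_in_def
proof (intro conjI D1_sub ballI)
  fix x y assume "x \<in> D1" "y \<in> D1"
  then obtain i i' where ii: "i \<in> {1..n}" "x = J i 1" "i' \<in> {1..n}" "y = J i' 1" by blast
  have l: "1 \<le> lam i" "1 \<le> lam i'" using lam_pos ii by auto
  show "x \<subseteq> y \<or> y \<subseteq> x"
  proof (cases "i \<le> i'")
    case True
    then have "y \<subseteq> x" using Jsub[OF ii(3) l(2), of i 1] V1 ii by auto
    then show ?thesis by blast
  next
    case False
    then have "x \<subseteq> y" using Jsub[OF ii(1) l(1), of i' 1] V1 ii by auto
    then show ?thesis by blast
  qed
qed

lemma D2_down: "is_down_set P (\<subseteq>) D2"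
  unfolding is_down_set_def
proof (intro conjI D2_sub ballI impI)
  fix x y assume x: "x \<in> P" and y: "y \<in> D2" and xy: "x \<subseteq> y"
  obtain j where j: "j \<in> {1..d}" "y = J n j" using y by blast
  obtain i' j' where x': "x = J i' j'" "i' \<in> {1..n}" "j' \<in> {1..lam i'}" using x by (rule JG_E)
  have le: "\<forall>k\<in>{1..n}. V i' j' k \<le> V n j k" using Jsub[of i' j' n j] x' j xy by auto
  have "i' = n"
  proof (rule ccontr)
    assume "i' \<noteq> n"
    then have "i' \<le> n - 1" using x' by auto
    then have "V i' j' (n - 1) = j'" using Vge[OF x'(2) nn(2)] by simp
    moreover have "V n j (n - 1) = 0" using V2[of j "n - 1"] j nn n2 by auto
    ultimately show False using le nn(2) x' by fastforce
  qed
  then have "j' \<le> j" using le nn(1) Vn[OF nn(1)] by fastforce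
  then show "x \<in> D2" using x' j \<open>i' = n\<close> by auto
qed

lemma D2_chain: "is_chain_in P (\<subseteq>) D2"
  unfolding is_chain_in_def
proof (intro conjI D2_sub ballI)
  fix x y assume "x \<in> D2" "y \<in> D2"
  then obtain j j' where jj: "j \<in> {1..d}" "x = J n j" "j' \<in> {1..d}" "y = J n j'" by blast
  have l: "j \<le> lam n" "j' \<le> lam n" using jj by auto
  show "x \<subseteq> y \<or> y \<subseteq> x"
  proof (cases "j \<le> j'")
    case True
    then have "x \<subseteq> y" using Jsub[OF nn(1) l(1), of n j'] V2 jj by auto
    then show ?thesis by blast
  next
    case False
    then have "y \<subseteq> x" using Jsub[OF nn(1) l(2), of n j] V2 jj by auto
    then show ?thesis by blast
  qed
qed

lemma F4: "x \<in> P \<Longrightarrow> x \<notin> D2 \<Longrightarrow> J (n - 1) 1 \<subseteq> x"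
proof -
  assume x: "x \<in> P" and nx: "x \<notin> D2"
  obtain i j where x': "x = J i j" "i \<in> {1..n}" "j \<in> {1..lam i}" using x by (rule JG_E)
  have l: "1 \<le> lam (n - 1)" using lam_pos nn by auto
  have "\<forall>k\<in>{1..n}. V (n - 1) 1 k \<le> V i j k"
  proof
    fix k assume k: "k \<in> {1..n}"
    show "V (n - 1) 1 k \<le> V i j k"
    proof (cases "k < n - 1")
      case True then show ?thesis using V1[OF nn(2) k] by simp
    next
      case False
      then have "k = n - 1 \<or> k = n" using k by auto
      moreover have "V i j n \<ge> 1" using Vn x' by auto
      moreover have "V i j (n - 1) \<ge> 1"
      proof (cases "i = n")
        case True
        then have "j > d" using nx x' by auto
        then show ?thesis using Vnm1 True by simp
      next
        case False
        then show ?thesis using Vge[OF x'(2) nn(2)] x' by auto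
      qed
      ultimately show ?thesis using V1[OF nn(2) k] by auto
    qed
  qed
  then show ?thesis using Jsub[OF nn(2) l] x' by simp
qed

lemma F5: "x \<in> P \<Longrightarrow> x \<notin> D1 \<Longrightarrow> J n 2 \<subseteq> x"
proof -
  assume x: "x \<in> P" and nx: "x \<notin> D1"
  obtain i j where x': "x = J i j" "i \<in> {1..n}" "j \<in> {1..lam i}" using x by (rule JG_E)
  have j2: "j \<ge> 2" using nx x' by (cases "j = 1") auto
  have l: "2 \<le> lam n" using d2 by simp
  have "\<forall>k\<in>{1..n}. V n 2 k \<le> V i j k"
    using V2[OF d2] Vn[OF x'(2)] j2 by auto
  then show ?thesis using Jsub[OF nn(1) l] x' by simp
qed

lemma F6: "\<not> J (n - 1) 1 \<subseteq> J n 2" "\<not> J n 2 \<subseteq> J (n - 1) 1"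
proof -
  have l: "1 \<le> lam (n - 1)" "2 \<le> lam n" using lam_pos nn d2 by auto
  have "V (n - 1) 1 (n - 1) = 1" using V1 nn by simp
  moreover have "V n 2 (n - 1) = 0" using V2[OF d2 nn(2)] n2 by simp
  ultimately have "\<not> (\<forall>k\<in>{1..n}. V (n - 1) 1 k \<le> V n 2 k)" using nn(2) by fastforce
  then show "\<not> J (n - 1) 1 \<subseteq> J n 2" using Jsub[OF nn(2) l(1)] by blast
  have "V n 2 n = 2" using Vn nn by simp
  moreover have "V (n - 1) 1 n = 1" using V1 nn by simp
  ultimately have "\<not> (\<forall>k\<in>{1..n}. V n 2 k \<le> V (n - 1) 1 k)" using nn(1) by fastforce
  then show "\<not> J n 2 \<subseteq> J (n - 1) 1" using Jsub[OF nn(1) l(2)] by blast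
qed

lemma mem: "J (n - 1) 1 \<in> D1" "J n 2 \<in> D2" "J (n - 1) 1 \<in> P" "J n 2 \<in> P"
proof -
  show a: "J (n - 1) 1 \<in> D1" using nn by blast
  show b: "J n 2 \<in> D2" using d2 by force
  show "J (n - 1) 1 \<in> P" using a D1_sub by blast
  show "J n 2 \<in> P" using b D2_sub by blast
qed

lemma notin: "J (n - 1) 1 \<notin> D2" "J n 2 \<notin> D1"
proof -
  show "J (n - 1) 1 \<notin> D2"
  proof
    assume "J (n - 1) 1 \<in> D2"
    then show False using D2_chain mem(2) F6 unfolding is_chain_in_def by blast
  qed
  show "J n 2 \<notin> D1"
  proof
    assume "J n 2 \<in> D1"
    then show False using D1_chain mem(1) F6 unfolding is_chain_in_def by blast
  qed
qed

lemma dsc_cases: "down_set_chain P (\<subseteq>) X \<Longrightarrow> X \<subseteq> D1 \<or> X \<subseteq> D2"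
proof (rule ccontr)
  assume X: "down_set_chain P (\<subseteq>) X" and c: "\<not> (X \<subseteq> D1 \<or> X \<subseteq> D2)"
  then obtain x y where x: "x \<in> X" "x \<notin> D1" and y: "y \<in> X" "y \<notin> D2" by blast
  have XP: "X \<subseteq> P" using X unfolding down_set_chain_def is_chain_in_def by blast
  have a: "J n 2 \<in> X" using F5[of x] x XP X mem unfolding down_set_chain_def is_down_set_def by blast
  have b: "J (n - 1) 1 \<in> X" using F4[of y] y XP X mem unfolding down_set_chain_def is_down_set_def by blast
  show False using a b X F6 unfolding down_set_chain_def is_chain_in_def by blast
qed

lemma final:
  "{X. maximal_down_set_chain P (\<subseteq>) X} = {D1, D2} \<and> D1 \<noteq> D2"
proof -
  have d1: "down_set_chain P (\<subseteq>) D1" using D1_down D1_chain down_set_chain_def by blast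
  have d2: "down_set_chain P (\<subseteq>) D2" using D2_down D2_chain down_set_chain_def by blast
  have n12: "\<not> D1 \<subseteq> D2" using mem(1) notin(1) by blast
  have n21: "\<not> D2 \<subseteq> D1" using mem(2) notin(2) by blast
  have m1: "maximal_down_set_chain P (\<subseteq>) D1"
    unfolding maximal_down_set_chain_def
  proof (intro conjI d1 notI)
    assume "\<exists>Y. down_set_chain P (\<subseteq>) Y \<and> D1 \<subset> Y"
    then obtain Y where Y: "down_set_chain P (\<subseteq>) Y" "D1 \<subset> Y" by blast
    from dsc_cases[OF Y(1)] show False
    proof
      assume "Y \<subseteq> D1" then show False using Y(2) by blast
    next
      assume "Y \<subseteq> D2" then show False using Y(2) n12 by blast
    qed
  qed
  have m2: "maximal_down_set_chain P (\<subseteq>) D2"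
    unfolding maximal_down_set_chain_def
  proof (intro conjI d2 notI)
    assume "\<exists>Y. down_set_chain P (\<subseteq>) Y \<and> D2 \<subset> Y"
    then obtain Y where Y: "down_set_chain P (\<subseteq>) Y" "D2 \<subset> Y" by blast
    from dsc_cases[OF Y(1)] show False
    proof
      assume "Y \<subseteq> D2" then show False using Y(2) by blast
    next
      assume "Y \<subseteq> D1" then show False using Y(2) n21 by blast
    qed
  qed
  have "X = D1 \<or> X = D2" if X: "maximal_down_set_chain P (\<subseteq>) X" for X
  proof -
    have Xd: "down_set_chain P (\<subseteq>) X" and nX: "\<not> (\<exists>Y. down_set_chain P (\<subseteq>) Y \<and> X \<subset> Y)"
      using X unfolding maximal_down_set_chain_def by auto
    from dsc_cases[OF Xd] show ?thesis
    proof
      assume "X \<subseteq> D1"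
      then have "X = D1 \<or> X \<subset> D1" by blast
      then show ?thesis using nX d1 by blast
    next
      assume "X \<subseteq> D2"
      then have "X = D2 \<or> X \<subset> D2" by blast
      then show ?thesis using nX d2 by blast
    qed
  qed
  then have "{X. maximal_down_set_chain P (\<subseteq>) X} = {D1, D2}" using m1 m2 by blast
  then show ?thesis using n12 by blast
qed

end

lemma mainTheorem19:
  fixes p n :: nat and lam :: "nat \<Rightarrow> nat"
  assumes "prime p" and "p \<noteq> 2"
    and "n \<ge> 2"
    and "0 < lam 1"
    and "\<And>i k. i \<in> {1..n} \<Longrightarrow> k \<in> {1..n} \<Longrightarrow> i < k \<Longrightarrow> lam i < lam k"
    and "lam n - lam (n - 1) \<ge> 2"
  shows "{X. maximal_down_set_chain (JG p n lam) (\<subseteq>) X} =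
           {{J_set p n lam i 1 | i. i \<in> {1..n}},
            {J_set p n lam n j | j. j \<in> {1..lam n - lam (n - 1)}}}
       \<and> {J_set p n lam i 1 | i. i \<in> {1..n}} \<noteq> {J_set p n lam n j | j. j \<in> {1..lam n - lam (n - 1)}}"
proof -
  interpret setting p n lam using assms by unfold_locales auto
  show ?thesis by (rule final)
qed

end
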